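(* Let $k$ be a field containing all $m$-th roots of unity, with $p\nmid m$ if $\operatorname{char}(k)=p>0$. Let $\mathcal A$ be a perfect $k$-algebra, $S$ a commutative associative unital $k$-algebra, $\sigma_1\in\operatorname{Aut}(\mathcal A)$, $\sigma_2\in\operatorname{Aut}(S)$ with $\sigma_1^m=\mathrm{id}$, $\sigma_2^m=\mathrm{id}$; assume $S_{\bar 1}$ contains an invertible element $u$ of $S$, and that $\psi:C(\mathcal A)\otimes S\to C(\mathcal A\otimes S)$, $\gamma\otimes s\mapsto\gamma\otimes L_s$, is an isomorphism. Then the restriction map $\pi:\mathcal D(\mathcal A\otimes S)_{\bar 0}\to\mathcal D((\mathcal A\otimes S)_{\bar 0})$, $D\mapsto D|_{(\mathcal A\otimes S)_{\bar 0}}$, is surjective.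
   Context: Algebras are $k$-vector spaces with bilinear product (not necessarily associative); perfect means $\mathcal A\mathcal A=\mathcal A$; $C(\mathcal A)$ is the centroid $\{\gamma\in\operatorname{End}(\mathcal A)\mid\gamma(xy)=\gamma(x)y=x\gamma(y)\}$; $\mathcal D$ denotes derivations; $L_s$ is left multiplication. Fix a primitive $m$-th root of unity $\omega$; $\mathcal A_{\bar i}=\{a\mid\sigma_1(a)=\omega^ia\}$, $S_{\bar i}=\{s\mid\sigma_2(s)=\omega^is\}$, $(\mathcal A\otimes S)_{\bar i}=\sum_{\bar j}\mathcal A_{\bar i-\bar j}\otimes S_{\bar j}$; $(\mathcal A\otimes S)_{\bar 0}$ is the fixed-point subalgebra of $\sigma_1\otimes\sigma_2$; $\mathcal D(\mathcal A\otimes S)_{\bar 0}$ is the set of derivations of $\mathcal A\otimes S$ mapping each $(\mathcal A\otimes S)_{\bar j}$ into itself. *)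

theory Defs
  imports Complex_Main "HOL-Library.Function_Algebras"
begin

definition k_algebra :: "('k::field \<Rightarrow> 'a::ab_group_add \<Rightarrow> 'a) \<Rightarrow> ('a \<Rightarrow> 'a \<Rightarrow> 'a) \<Rightarrow> bool" where
  "k_algebra sc mul \<longleftrightarrow> Vector_Spaces.vector_space sc \<and>
     (\<forall>x y z. mul (x + y) z = mul x z + mul y z) \<and>
     (\<forall>x y z. mul x (y + z) = mul x y + mul x z) \<and>
     (\<forall>c x y. mul (sc c x) y = sc c (mul x y)) \<and>
     (\<forall>c x y. mul x (sc c y) = sc c (mul x y))"

definition perfect :: "('k::field \<Rightarrow> 'a::ab_group_add \<Rightarrow> 'a) \<Rightarrow> ('a \<Rightarrow> 'a \<Rightarrow> 'a) \<Rightarrow> bool" where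
  "perfect sc mul \<longleftrightarrow> module.span sc {mul x y | x y. True} = UNIV"

definition comm_unital_k_algebra :: "('k::field \<Rightarrow> 's::comm_ring_1 \<Rightarrow> 's) \<Rightarrow> bool" where
  "comm_unital_k_algebra sc \<longleftrightarrow> Vector_Spaces.vector_space sc \<and> (\<forall>c x y. sc c (x * y) = sc c x * y)"

definition alg_aut :: "('k::field \<Rightarrow> 'a::ab_group_add \<Rightarrow> 'a) \<Rightarrow> ('a \<Rightarrow> 'a \<Rightarrow> 'a) \<Rightarrow> ('a \<Rightarrow> 'a) \<Rightarrow> bool" where
  "alg_aut sc mul f \<longleftrightarrow> Vector_Spaces.linear sc sc f \<and> bij f \<and> (\<forall>x y. f (mul x y) = mul (f x) (f y))"

definition centroid :: "('k::field \<Rightarrow> 'a::ab_group_add \<Rightarrow> 'a) \<Rightarrow> ('a \<Rightarrow> 'a \<Rightarrow> 'a) \<Rightarrow> ('a \<Rightarrow> 'a) set" where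
  "centroid sc mul = {g. Vector_Spaces.linear sc sc g \<and> (\<forall>x y. g (mul x y) = mul (g x) y \<and> g (mul x y) = mul x (g y))}"

definition derivations :: "('k::field \<Rightarrow> 'a::ab_group_add \<Rightarrow> 'a) \<Rightarrow> ('a \<Rightarrow> 'a \<Rightarrow> 'a) \<Rightarrow> ('a \<Rightarrow> 'a) set" where
  "derivations sc mul = {D. Vector_Spaces.linear sc sc D \<and> (\<forall>x y. D (mul x y) = mul (D x) y + mul x (D y))}"

text \<open>Derivations of a subalgebra with carrier B: k-linear maps B \<rightarrow> B satisfying
  the Leibniz rule on B (values outside B are irrelevant).\<close>
definition derivations_on :: "('k::field \<Rightarrow> 'a::ab_group_add \<Rightarrow> 'a) \<Rightarrow> ('a \<Rightarrow> 'a \<Rightarrow> 'a) \<Rightarrow> 'a set \<Rightarrow> ('a \<Rightarrow> 'a) set" where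
  "derivations_on sc mul B = {d. (\<forall>x\<in>B. d x \<in> B) \<and>
      (\<forall>x\<in>B. \<forall>y\<in>B. d (x + y) = d x + d y) \<and>
      (\<forall>c. \<forall>x\<in>B. d (sc c x) = sc c (d x)) \<and>
      (\<forall>x\<in>B. \<forall>y\<in>B. d (mul x y) = mul (d x) y + mul x (d y))}"

text \<open>@ is avoided. is_tensor scA V scS scT tens: the type 't with scalar multiplication
  scT, together with the map tens, is the tensor product V \<otimes>_k S of the subspace V
  (of the k-space 'a) with the k-space 's, i.e. tens is k-bilinear on V \<times> S, the pure
  tensors span 't, and the induced map V \<otimes> S \<rightarrow> 't is injective, expressed as:
  for finitely many linearly independent s_j in S and v_j in V,
  sum_j v_j \<otimes> s_j = 0 implies all v_j = 0.  This characterises the tensor product up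
  to unique isomorphism.\<close>
definition is_tensor ::
  "('k::field \<Rightarrow> 'a::ab_group_add \<Rightarrow> 'a) \<Rightarrow> 'a set \<Rightarrow> ('k \<Rightarrow> 's::ab_group_add \<Rightarrow> 's)
   \<Rightarrow> ('k \<Rightarrow> 't::ab_group_add \<Rightarrow> 't) \<Rightarrow> ('a \<Rightarrow> 's \<Rightarrow> 't) \<Rightarrow> bool" where
  "is_tensor scA V scS scT tens \<longleftrightarrow>
     Vector_Spaces.vector_space scT \<and> module.subspace scA V \<and>
     (\<forall>x\<in>V. \<forall>y\<in>V. \<forall>s. tens (x + y) s = tens x s + tens y s) \<and>
     (\<forall>c. \<forall>x\<in>V. \<forall>s. tens (scA c x) s = scT c (tens x s)) \<and>
     (\<forall>x\<in>V. \<forall>s t. tens x (s + t) = tens x s + tens x t) \<and>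
     (\<forall>c. \<forall>x\<in>V. \<forall>s. tens x (scS c s) = scT c (tens x s)) \<and>
     module.span scT {tens x s | x s. x \<in> V} = UNIV \<and>
     (\<forall>F f. finite F \<and> \<not> module.dependent scS F \<and> f ` F \<subseteq> V \<and>
            (\<Sum>s\<in>F. tens (f s) s) = 0 \<longrightarrow> (\<forall>s\<in>F. f s = 0))"

definition is_tensor_algebra ::
  "('k::field \<Rightarrow> 'a::ab_group_add \<Rightarrow> 'a) \<Rightarrow> ('a \<Rightarrow> 'a \<Rightarrow> 'a) \<Rightarrow> ('k \<Rightarrow> 's::comm_ring_1 \<Rightarrow> 's)
   \<Rightarrow> ('k \<Rightarrow> 't::ab_group_add \<Rightarrow> 't) \<Rightarrow> ('t \<Rightarrow> 't \<Rightarrow> 't) \<Rightarrow> ('a \<Rightarrow> 's \<Rightarrow> 't) \<Rightarrow> bool" where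
  "is_tensor_algebra scA mulA scS scT mulT tens \<longleftrightarrow>
     is_tensor scA UNIV scS scT tens \<and> k_algebra scT mulT \<and>
     (\<forall>a s b t. mulT (tens a s) (tens b t) = tens (mulA a b) (s * t))"

definition eigcomp :: "('k::field \<Rightarrow> 'a \<Rightarrow> 'a) \<Rightarrow> ('a \<Rightarrow> 'a) \<Rightarrow> 'k \<Rightarrow> nat \<Rightarrow> 'a set" where
  "eigcomp sc \<sigma> \<omega> i = {a. \<sigma> a = sc (\<omega> ^ i) a}"

text \<open>(A \<otimes> S)_i = sum over j in Z/m of A_{i-j} \<otimes> S_j (indices taken mod m).\<close>
definition tensor_comp ::
  "('k::field \<Rightarrow> 'a \<Rightarrow> 'a) \<Rightarrow> ('a \<Rightarrow> 'a) \<Rightarrow> ('k \<Rightarrow> 's \<Rightarrow> 's) \<Rightarrow> ('s \<Rightarrow> 's)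
   \<Rightarrow> ('k \<Rightarrow> 't::ab_group_add \<Rightarrow> 't) \<Rightarrow> ('a \<Rightarrow> 's \<Rightarrow> 't) \<Rightarrow> 'k \<Rightarrow> nat \<Rightarrow> nat \<Rightarrow> 't set" where
  "tensor_comp scA \<sigma>1 scS \<sigma>2 scT tens \<omega> m i =
     module.span scT {tens a s | a s j. j < m \<and> a \<in> eigcomp scA \<sigma>1 \<omega> ((i + m - j) mod m)
                                        \<and> s \<in> eigcomp scS \<sigma>2 \<omega> j}"

end

theory Submission
  imports Defs
begin

lemma roots_sum:
  fixes z :: "'k::field"
  assumes "z ^ m = 1" shows "(\<Sum>k<m. z ^ k) = (if z = 1 then of_nat m else 0)"
  using assms by (simp add: sum_gp_strict)

locale cyc = vector_space sc for sc :: "'k::field \<Rightarrow> 'b::ab_group_add \<Rightarrow> 'b" +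
  fixes \<sigma> :: "'b \<Rightarrow> 'b" and \<omega> :: 'k and m :: nat
  assumes lin: "Vector_Spaces.linear sc sc \<sigma>" and ord: "\<sigma> ^^ m = id"
    and mpos: "m > 0" and mnz: "of_nat m \<noteq> (0::'k)"
    and wm: "\<omega> ^ m = 1" and prim: "\<forall>j. 0 < j \<and> j < m \<longrightarrow> \<omega> ^ j \<noteq> 1"
begin

lemma w_nz: "\<omega> \<noteq> 0" using wm mpos by (metis power_0_left zero_neq_one gr_implies_not0)

lemma w_mod: "\<omega> ^ e = \<omega> ^ (e mod m)"
proof -
  have "\<omega> ^ e = \<omega> ^ (m * (e div m) + e mod m)" by (simp only: mult_div_mod_eq)
  also have "\<dots> = \<omega> ^ (e mod m)" by (simp only: power_add power_mult wm power_one mult_1_left)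
  finally show ?thesis .
qed

lemma w_eq1: "\<omega> ^ e = 1 \<longleftrightarrow> e mod m = 0"
  using prim mpos w_mod[of e] by (metis mod_less_divisor neq0_conv power_0)

lemma w_inj: assumes "a < m" "b < m" "\<omega> ^ a = \<omega> ^ b" shows "a = b"
proof (rule ccontr)
  assume ne: "a \<noteq> b"
  { fix a b assume ab: "a < b" "b < m" "\<omega> ^ a = \<omega> ^ b"
    have "\<omega> ^ b = \<omega> ^ a * \<omega> ^ (b - a)" using ab by (metis ab(1) le_add_diff_inverse less_imp_le power_add)
    with ab have "\<omega> ^ (b - a) = 1" using w_nz by simp
    with prim ab have False by auto }
  with ne assms show False by (metis linorder_neqE_nat)
qed

lemma w_eq_iff: "\<omega> ^ a = \<omega> ^ b \<longleftrightarrow> a mod m = b mod m"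
  using w_inj[of "a mod m" "b mod m"] w_mod[of a] w_mod[of b] mpos by auto

lemma iw_pow: "inverse \<omega> ^ a * \<omega> ^ b = (if a \<le> b then \<omega> ^ (b - a) else inverse \<omega> ^ (a - b))"
  using w_nz by (simp add: power_diff power_inverse field_simps)

definition prj :: "nat \<Rightarrow> 'b \<Rightarrow> 'b" where
  "prj n x = sc (inverse (of_nat m)) (\<Sum>k<m. sc (inverse \<omega> ^ (n * k)) ((\<sigma> ^^ k) x))"

lemma lin_pow: "Vector_Spaces.linear sc sc (\<sigma> ^^ k)"
proof (induction k)
  case 0 then show ?case using vector_space_axioms by (simp add: Vector_Spaces.linear_iff)
next
  case (Suc k) then show ?case using lin vector_space_axioms by (simp add: Vector_Spaces.linear_iff)
qed

lemma linear_prj: "Vector_Spaces.linear sc sc (prj n)"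
proof -
  have "(\<sigma> ^^ k) (x + y) = (\<sigma> ^^ k) x + (\<sigma> ^^ k) y" "(\<sigma> ^^ k) (sc c x) = sc c ((\<sigma> ^^ k) x)" for k x y c
    using lin_pow[of k] by (auto simp: Vector_Spaces.linear_iff)
  then show ?thesis
    unfolding Vector_Spaces.linear_iff prj_def
    by (auto simp: vector_space_axioms scale_right_distrib sum.distrib scale_sum_right ac_simps)
qed

lemma pow_eig: "\<sigma> x = sc c x \<Longrightarrow> (\<sigma> ^^ k) x = sc (c ^ k) x"
proof (induction k)
  case (Suc k) then show ?case using lin by (simp add: Vector_Spaces.linear_iff mult.commute)
qed simp

lemma prj_eig: assumes "\<sigma> x = sc (\<omega> ^ i) x" "n < m"
  shows "prj n x = (if i mod m = n then x else 0)"
proof -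
  define z where "z = inverse \<omega> ^ n * \<omega> ^ i"
  have "prj n x = sc (inverse (of_nat m)) (\<Sum>k<m. sc (z ^ k) x)"
    unfolding prj_def z_def using pow_eig[OF assms(1)]
    by (simp add: power_mult power_mult_distrib mult.commute flip: power_mult)
  also have "\<dots> = sc (inverse (of_nat m) * (\<Sum>k<m. z ^ k)) x"
    by (simp add: scale_sum_left scale_sum_right sum_distrib_left)
  moreover have "z ^ m = 1"
  proof -
    have pm: "(\<omega>^a)^m = 1" for a by (metis power_mult mult.commute wm power_one)
    show ?thesis unfolding z_def by (simp add: power_mult_distrib power_inverse pm)
  qed
  moreover have "z = 1 \<longleftrightarrow> i mod m = n"
  proof -
    have "z = 1 \<longleftrightarrow> \<omega> ^ i = \<omega> ^ n" unfolding z_def using w_nz by (auto simp: field_simps)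
    also have "\<dots> \<longleftrightarrow> i mod m = n" using w_eq_iff[of i n] assms(2) by simp
    finally show ?thesis .
  qed
  ultimately show ?thesis using mnz by (simp add: roots_sum)
qed

lemma iw_pow_eq1: "k < m \<Longrightarrow> inverse \<omega> ^ k = 1 \<longleftrightarrow> k = 0"
  using w_eq1[of k] by (simp add: power_inverse)

lemma sum_prj: "(\<Sum>n<m. prj n x) = x"
proof -
  have "(\<Sum>n<m. prj n x) = sc (inverse (of_nat m)) (\<Sum>n<m. \<Sum>k<m. sc (inverse \<omega> ^ (n * k)) ((\<sigma> ^^ k) x))"
    by (simp add: prj_def scale_sum_right)
  also have "(\<Sum>n<m. \<Sum>k<m. sc (inverse \<omega> ^ (n * k)) ((\<sigma> ^^ k) x))
      = (\<Sum>k<m. sc (\<Sum>n<m. (inverse \<omega> ^ k) ^ n) ((\<sigma> ^^ k) x))"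
    by (subst sum.swap) (simp add: scale_sum_left mult.commute flip: power_mult)
  also have "\<dots> = (\<Sum>k<m. if k = 0 then sc (of_nat m) x else 0)"
  proof (rule sum.cong[OF refl])
    fix k assume k: "k \<in> {..<m}"
    have pm: "(inverse \<omega> ^ k) ^ m = 1"
      by (metis power_mult mult.commute wm power_one power_inverse inverse_1)
    show "sc (\<Sum>n<m. (inverse \<omega> ^ k) ^ n) ((\<sigma> ^^ k) x) = (if k = 0 then sc (of_nat m) x else 0)"
      using roots_sum[OF pm] iw_pow_eq1[of k] k by auto
  qed
  also have "\<dots> = sc (of_nat m) x" using mpos by (simp add: sum.delta)
  finally show ?thesis using mnz by simp
qed

lemma prj_eigvec: "\<sigma> (prj n x) = sc (\<omega> ^ n) (prj n x)"
proof -
  interpret l: Vector_Spaces.linear sc sc \<sigma> by (rule lin)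
  define c where "c = inverse \<omega> ^ n"
  define f where "f k = sc (c ^ k) ((\<sigma> ^^ k) x)" for k
  have wc: "\<omega> ^ n * c = 1" unfolding c_def using w_nz by (simp add: power_inverse)
  have wmn: "\<omega> ^ (m * n) = 1" by (simp add: power_mult wm)
  have fm: "f m = f 0" unfolding f_def c_def using ord
    by (simp add: mult.commute power_mult wm power_inverse flip: power_mult) (simp add: wmn)
  have sh: "(\<Sum>k<m. f (Suc k)) = (\<Sum>k<m. f k)"
    using sum.lessThan_Suc_shift[of f m] sum.lessThan_Suc[of f m] fm by simp
  have "\<sigma> (prj n x) = sc (inverse (of_nat m)) (\<Sum>k<m. sc (c ^ k) ((\<sigma> ^^ Suc k) x))"
    unfolding prj_def c_def by (simp add: l.scale l.sum power_mult)
  also have "(\<Sum>k<m. sc (c ^ k) ((\<sigma> ^^ Suc k) x)) = (\<Sum>k<m. sc (\<omega> ^ n) (f (Suc k)))"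
    unfolding f_def by (rule sum.cong) (auto simp: wc mult.assoc[symmetric])
  also have "\<dots> = sc (\<omega> ^ n) (\<Sum>k<m. f k)" by (simp only: scale_sum_right[symmetric] sh)
  finally have X: "\<sigma> (prj n x) = sc (inverse (of_nat m)) (sc (\<omega> ^ n) (\<Sum>k<m. f k))" .
  have P: "prj n x = sc (inverse (of_nat m)) (\<Sum>k<m. f k)"
    unfolding prj_def f_def c_def by (simp add: power_mult)
  show ?thesis using X P by (simp add: mult.commute)
qed

end


locale bil =
  fixes scA :: "'k::field \<Rightarrow> 'a::ab_group_add \<Rightarrow> 'a" and scS :: "'k \<Rightarrow> 's::ab_group_add \<Rightarrow> 's"
    and scU :: "'k \<Rightarrow> 'u::ab_group_add \<Rightarrow> 'u" and B :: "'a \<Rightarrow> 's \<Rightarrow> 'u"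
  assumes vsA: "vector_space scA" and vsS: "vector_space scS" and vsU: "vector_space scU"
    and B1: "B (x + y) s = B x s + B y s"
    and B2: "B (scA c x) s = scU c (B x s)"
    and B3: "B x (s + t) = B x s + B x t"
    and B4: "B x (scS c s) = scU c (B x s)"
begin

lemma B0l: "B 0 s = 0" using B1[of 0 0 s] by simp
lemma B0r: "B x 0 = 0" using B3[of x 0 0] by simp
lemma Bneg: "B (- x) s = - B x s" using B1[of x "-x" s] B0l by (simp add: eq_neg_iff_add_eq_0 add.commute)

lemma Bsum_r: "B x (\<Sum>i\<in>J. t i) = (\<Sum>i\<in>J. B x (t i))"
  by (induction J rule: infinite_finite_induct) (auto simp: B0r B3)

lemma Bsum_l: "B (\<Sum>i\<in>J. t i) s = (\<Sum>i\<in>J. B (t i) s)"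
  by (induction J rule: infinite_finite_induct) (auto simp: B0l B1)

lemma reduce:
  assumes "finite I" "k \<in> I" "s k = (\<Sum>i\<in>I - {k}. scS (c i) (s i))"
  shows "(\<Sum>i\<in>I. B (a i) (s i)) = (\<Sum>i\<in>I - {k}. B (a i + scA (c i) (a k)) (s i))"
proof -
  have "(\<Sum>i\<in>I. B (a i) (s i)) = B (a k) (s k) + (\<Sum>i\<in>I - {k}. B (a i) (s i))"
    using assms by (simp add: sum.remove)
  also have "B (a k) (s k) = (\<Sum>i\<in>I - {k}. B (scA (c i) (a k)) (s i))"
    by (subst assms(3)) (simp add: Bsum_r B2 B4)
  finally show ?thesis by (simp add: B1 sum.distrib add.commute)
qed

end

lemma span_image_sum:
  assumes vs: "vector_space sc" and fin: "finite J" and y: "y \<in> module.span sc (s ` J)"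
  shows "\<exists>c. y = (\<Sum>i\<in>J. sc (c i) (s i))"
proof -
  interpret v: vector_space sc by (rule vs)
  from y show ?thesis
  proof (induction rule: v.span_induct_alt)
    case base then show ?case by (intro exI[of _ "\<lambda>_. 0"]) simp
  next
    case (step c x y)
    then obtain j c' where j: "j \<in> J" "x = s j" and y: "y = (\<Sum>i\<in>J. sc (c' i) (s i))" by auto
    have e1: "(\<Sum>i\<in>J. sc (if i = j then c else 0) (s i)) = (\<Sum>i\<in>J. if i = j then sc c (s i) else 0)"
      by (rule sum.cong) auto
    have e2: "(\<Sum>i\<in>J. if i = j then sc c (s i) else 0) = sc c x"
      using j fin by (simp add: sum.delta)
    have "(\<Sum>i\<in>J. sc (c' i + (if i = j then c else 0)) (s i)) = y + (\<Sum>i\<in>J. sc (if i = j then c else 0) (s i))"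
      unfolding y v.scale_left_distrib sum.distrib ..
    then have "sc c x + y = (\<Sum>i\<in>J. sc (c' i + (if i = j then c else 0)) (s i))"
      using e1 e2 by (simp add: add.commute)
    then show ?case by (intro exI[of _ "\<lambda>i. c' i + (if i = j then c else 0)"])
  qed
qed

lemma tensor_bil:
  assumes "is_tensor scA UNIV scS scT tens" "vector_space scA" "vector_space scS"
  shows "bil scA scS scT tens"
proof -
  have "Vector_Spaces.vector_space scT" using assms(1) unfolding is_tensor_def by blast
  moreover have "\<forall>x y s. tens (x + y) s = tens x s + tens y s" "\<forall>c x s. tens (scA c x) s = scT c (tens x s)"
     "\<forall>x s t. tens x (s + t) = tens x s + tens x t" "\<forall>c x s. tens x (scS c s) = scT c (tens x s)"
    using assms(1) unfolding is_tensor_def by simp_all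
  ultimately show ?thesis using assms(2,3) unfolding bil_def by blast
qed

lemma tensor_zero:
  assumes T: "is_tensor scA UNIV scS scT tens" and vsA: "vector_space scA" and vsS: "vector_space scS"
    and bB: "bil scA scS scU B"
  shows "finite I \<Longrightarrow> (\<Sum>i\<in>I. tens (a i) (s i)) = 0 \<Longrightarrow> (\<Sum>i\<in>I. B (a i) (s i)) = 0"
proof (induction "card I" arbitrary: I a rule: less_induct)
  case less
  interpret t: bil scA scS scT tens by (rule tensor_bil[OF T vsA vsS])
  interpret b: bil scA scS scU B by (rule bB)
  interpret vS: vector_space scS by (rule vsS)
  show ?case
  proof (cases "inj_on s I \<and> \<not> vS.dependent (s ` I)")
    case True
    define f where "f t = a (inv_into I s t)" for t
    have re: "(\<Sum>t\<in>s ` I. tens (f t) t) = (\<Sum>i\<in>I. tens (a i) (s i))"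
      using True by (simp add: sum.reindex f_def)
    have inj_cl: "\<forall>F f. finite F \<and> \<not> vS.dependent F \<and> f ` F \<subseteq> UNIV \<and> (\<Sum>s\<in>F. tens (f s) s) = 0 \<longrightarrow> (\<forall>s\<in>F. f s = 0)"
      using T[unfolded is_tensor_def, THEN conjunct2, THEN conjunct2, THEN conjunct2, THEN conjunct2,
          THEN conjunct2, THEN conjunct2, THEN conjunct2] .
    have fin: "finite (s ` I)" using less.prems(1) by simp
    have z: "(\<Sum>t\<in>s ` I. tens (f t) t) = 0" using re less.prems(2) by simp
    have "\<forall>t\<in>s ` I. f t = 0"
      using inj_cl[rule_format, of "s ` I" f] fin z True by blast
    then have "\<forall>i\<in>I. a i = 0" using True by (auto simp: f_def)
    then show ?thesis by (simp add: b.B0l)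
  next
    case False
    have "\<exists>k\<in>I. s k \<in> vS.span (s ` (I - {k}))"
    proof (cases "inj_on s I")
      case True
      with False have "vS.dependent (s ` I)" by auto
      then obtain t where t: "t \<in> s ` I" "t \<in> vS.span (s ` I - {t})" unfolding vS.dependent_def by blast
      then obtain k where k: "k \<in> I" "t = s k" by auto
      have "s ` I - {t} = s ` (I - {k})" using True k by (auto simp: inj_on_def)
      with t k show ?thesis by auto
    next
      case False
      then obtain i j where "i \<in> I" "j \<in> I" "i \<noteq> j" "s i = s j" unfolding inj_on_def by blast
      then show ?thesis by (intro bexI[of _ i]) (auto intro: vS.span_base)
    qed
    then obtain k where k: "k \<in> I" "s k \<in> vS.span (s ` (I - {k}))" by blast
    then obtain c where c: "s k = (\<Sum>i\<in>I - {k}. scS (c i) (s i))"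
      using span_image_sum[OF vsS _ k(2)] less.prems(1) by blast
    have "(\<Sum>i\<in>I - {k}. tens (a i + scA (c i) (a k)) (s i)) = 0"
      using t.reduce[OF less.prems(1) k(1) c, of a] less.prems by simp
    then have "(\<Sum>i\<in>I - {k}. B (a i + scA (c i) (a k)) (s i)) = 0"
    proof -
      have cl: "card (I - {k}) < card I" using less.prems(1) k(1) by (rule card_Diff1_less)
      show ?thesis using less.hyps[OF cl, of "\<lambda>i. a i + scA (c i) (a k)"] less.prems(1) \<open>(\<Sum>i\<in>I - {k}. tens (a i + scA (c i) (a k)) (s i)) = 0\<close> by blast
    qed
    then show ?thesis using b.reduce[OF less.prems(1) k(1) c, of a] by simp
  qed
qed

context bil begin
lemma sl_neg: "sum_list (map (\<lambda>(a, s). B (- a) s) ys) = - sum_list (map (\<lambda>(a, s). B a s) ys)"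
  by (induction ys) (auto simp: Bneg)
lemma sl_scale: "sum_list (map (\<lambda>(a, s). B a s) (map (\<lambda>(a, s). (scA c a, s)) ys)) = scU c (sum_list (map (\<lambda>(a, s). B a s) ys))"
proof -
  interpret vU: vector_space scU by (rule vsU)
  show ?thesis by (induction ys) (auto simp: B2 vU.scale_right_distrib)
qed
end

lemma map_map_pair: "map (\<lambda>(a, s). G a s) (map (\<lambda>(a, s). (h a, s)) ys) = map (\<lambda>(a, s). G (h a) s) ys"
  by (induction ys) auto

lemma sl_nth: "sum_list (map (\<lambda>(a, s). G a s) zs) = (\<Sum>i\<in>{0..<length zs}. G (fst (zs ! i)) (snd (zs ! i)))"
  by (simp add: sum_list_sum_nth case_prod_beta)

lemma tensor_lift:
  assumes T: "is_tensor scA UNIV scS scT tens" and vsA: "vector_space scA" and vsS: "vector_space scS"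
    and bB: "bil scA scS scU B"
  shows "\<exists>F. Vector_Spaces.linear scT scU F \<and> (\<forall>a s. F (tens a s) = B a s)"
proof -
  interpret t: bil scA scS scT tens by (rule tensor_bil[OF T vsA vsS])
  interpret b: bil scA scS scU B by (rule bB)
  interpret vT: vector_space scT by (rule t.vsU)
  interpret vU: vector_space scU by (rule b.vsU)
  define tl where "tl xs = sum_list (map (\<lambda>(a, s). tens a s) xs)" for xs
  define bl where "bl xs = sum_list (map (\<lambda>(a, s). B a s) xs)" for xs
  have wd: "bl xs = bl ys" if "tl xs = tl ys" for xs ys
  proof -
    define zs where "zs = xs @ map (\<lambda>(a, s). (- a, s)) ys"
    have "tl zs = 0" using that unfolding zs_def tl_def by (simp only: map_append sum_list_append map_map_pair t.sl_neg) simp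
    then have "(\<Sum>i\<in>{0..<length zs}. tens (fst (zs ! i)) (snd (zs ! i))) = 0"
      unfolding tl_def sl_nth .
    then have "(\<Sum>i\<in>{0..<length zs}. B (fst (zs ! i)) (snd (zs ! i))) = 0"
      using tensor_zero[OF T vsA vsS bB, where I="{0..<length zs}" and a="\<lambda>i. fst (zs ! i)" and s="\<lambda>i. snd (zs ! i)"] by simp
    then have "bl zs = 0" unfolding bl_def sl_nth .
    then show ?thesis unfolding zs_def bl_def by (simp only: map_append sum_list_append map_map_pair b.sl_neg) simp
  qed
  have spanU: "vT.span {tens x s | x s. x \<in> UNIV} = UNIV"
    using T[unfolded is_tensor_def, THEN conjunct2, THEN conjunct2, THEN conjunct2, THEN conjunct2,
          THEN conjunct2, THEN conjunct2, THEN conjunct1] .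
  have rep: "\<exists>xs. x = tl xs" for x
  proof -
    have "x \<in> vT.span {tens x s | x s. x \<in> UNIV}" using spanU by simp
    then show ?thesis
    proof (induction rule: vT.span_induct_alt)
      case base then show ?case by (intro exI[of _ "[]"]) (simp add: tl_def)
    next
      case (step c x y)
      then obtain a s ys where "x = tens a s" "y = tl ys" by auto
      then have "scT c x + y = tl ((scA c a, s) # ys)" by (simp add: tl_def t.B2)
      then show ?case by blast
    qed
  qed
  define F where "F x = bl (SOME xs. x = tl xs)" for x
  have Ftl: "F (tl xs) = bl xs" for xs
  proof -
    have "tl xs = tl (SOME ys. tl xs = tl ys)" by (rule someI[of _ xs]) simp
    from wd[OF this] show ?thesis unfolding F_def by simp
  qed
  have "Vector_Spaces.linear scT scU F"
    unfolding Vector_Spaces.linear_iff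
  proof (intro conjI allI)
    show "vector_space scT" "vector_space scU" by unfold_locales
    fix x y
    obtain xs ys where xy: "x = tl xs" "y = tl ys" using rep by blast
    have "x + y = tl (xs @ ys)" unfolding xy tl_def by simp
    then show "F (x + y) = F x + F y" unfolding xy by (simp add: Ftl) (simp add: bl_def)
  next
    fix c x
    obtain xs where xy: "x = tl xs" using rep by blast
    have "scT c x = tl (map (\<lambda>(a, s). (scA c a, s)) xs)" unfolding xy tl_def by (rule t.sl_scale[symmetric])
    then show "F (scT c x) = scU c (F x)" unfolding xy by (simp only: Ftl bl_def b.sl_scale)
  qed
  moreover have "F (tens a s) = B a s" for a s
    using Ftl[of "[(a, s)]"] by (simp add: tl_def bl_def)
  ultimately show ?thesis by blast
qed



locale main =
  fixes scA :: "'k::field \<Rightarrow> 'a::ab_group_add \<Rightarrow> 'a" and mulA :: "'a \<Rightarrow> 'a \<Rightarrow> 'a"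
    and scS :: "'k \<Rightarrow> 's::comm_ring_1 \<Rightarrow> 's" and scT :: "'k \<Rightarrow> 't::ab_group_add \<Rightarrow> 't"
    and mulT :: "'t \<Rightarrow> 't \<Rightarrow> 't" and tens :: "'a \<Rightarrow> 's \<Rightarrow> 't"
    and \<sigma>1 :: "'a \<Rightarrow> 'a" and \<sigma>2 :: "'s \<Rightarrow> 's" and \<omega> :: 'k and m :: nat and u :: 's and v :: 's
    and \<sigma>T :: "'t \<Rightarrow> 't" and L :: "'s \<Rightarrow> 't \<Rightarrow> 't" and d :: "'t \<Rightarrow> 't"
  assumes vsA: "vector_space scA" and vsS: "vector_space scS"
   and tensT: "is_tensor scA UNIV scS scT tens"
   and mB1: "mulT (x + y) z = mulT x z + mulT y z" and mB2: "mulT x (y + z) = mulT x y + mulT x z"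
   and mB3: "mulT (scT c x) y = scT c (mulT x y)" and mB4: "mulT x (scT c y) = scT c (mulT x y)"
   and prodT: "mulT (tens a s) (tens b t) = tens (mulA a b) (s * t)"
   and Sal: "scS c (p * q) = scS c p * q"
   and s1lin: "Vector_Spaces.linear scA scA \<sigma>1" and s1mul: "\<sigma>1 (mulA a b) = mulA (\<sigma>1 a) (\<sigma>1 b)"
   and s1ord: "\<sigma>1 ^^ m = id"
   and s2lin: "Vector_Spaces.linear scS scS \<sigma>2" and s2mul: "\<sigma>2 (p * q) = \<sigma>2 p * \<sigma>2 q"
   and s2one: "\<sigma>2 1 = 1" and s2ord: "\<sigma>2 ^^ m = id"
   and sTlin: "Vector_Spaces.linear scT scT \<sigma>T" and sTt: "\<sigma>T (tens a s) = tens (\<sigma>1 a) (\<sigma>2 s)"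
   and Llin: "Vector_Spaces.linear scT scT (L s)" and Lt: "L s (tens a t) = tens a (s * t)"
   and Lc1: "L s (mulT x y) = mulT (L s x) y" and Lc2: "L s (mulT x y) = mulT x (L s y)"
   and mpos: "m > 0" and mnz: "of_nat m \<noteq> (0::'k)" and wm: "\<omega> ^ m = 1"
   and prim: "\<forall>j. 0 < j \<and> j < m \<longrightarrow> \<omega> ^ j \<noteq> 1"
   and uw: "\<sigma>2 u = scS \<omega> u" and uv: "u * v = 1"
   and dder: "d \<in> derivations_on scT mulT (tensor_comp scA \<sigma>1 scS \<sigma>2 scT tens \<omega> m 0)"
begin

abbreviation TC where "TC j \<equiv> tensor_comp scA \<sigma>1 scS \<sigma>2 scT tens \<omega> m j"
definition E where "E j = {x. \<sigma>T x = scT (\<omega> ^ j) x}"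

lemma vsT: "vector_space scT" using tensT unfolding is_tensor_def by blast

sublocale vA: vector_space scA by (rule vsA)
sublocale vS: vector_space scS by (rule vsS)
sublocale vT: vector_space scT by (rule vsT)
sublocale vTT: vector_space_pair scT scT by unfold_locales
sublocale t: bil scA scS scT tens by (rule tensor_bil[OF tensT vsA vsS])
sublocale mt: bil scT scT scT mulT by (unfold_locales) (auto simp: vsT mB1 mB2 mB3 mB4)

lemma span_gen: "vT.span {tens a s | a s. True} = UNIV"
  using tensT[unfolded is_tensor_def, THEN conjunct2, THEN conjunct2, THEN conjunct2, THEN conjunct2,
          THEN conjunct2, THEN conjunct2, THEN conjunct1] by simp

lemma in_span_gen: "x \<in> vT.span {tens a s | a s. True}" using span_gen by simp

lemma lin_eq:
  assumes "Vector_Spaces.linear scT scT f" "Vector_Spaces.linear scT scT g" "\<And>a s. f (tens a s) = g (tens a s)"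
  shows "f x = g x"
  by (rule vTT.linear_eq_on[OF assms(1,2) in_span_gen]) (use assms(3) in auto)

lemma lin_pow: "Vector_Spaces.linear scT scT (f ^^ k)" if "Vector_Spaces.linear scT scT f"
proof (induction k)
  case 0 then show ?case using vsT by (simp add: Vector_Spaces.linear_iff)
next
  case (Suc k) then show ?case using that vsT by (simp add: Vector_Spaces.linear_iff)
qed

lemma sTord: "\<sigma>T ^^ m = id"
proof -
  have l1: "Vector_Spaces.linear scT scT (\<sigma>T ^^ k)" for k by (rule lin_pow[OF sTlin])
  have pw: "(\<sigma>T ^^ k) (tens a s) = tens ((\<sigma>1 ^^ k) a) ((\<sigma>2 ^^ k) s)" for k a s
    by (induction k) (auto simp: sTt)
  have "(\<sigma>T ^^ m) x = id x" for x
    by (rule lin_eq[OF l1 vT.linear_id]) (simp add: pw s1ord s2ord)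
  then show ?thesis by auto
qed

sublocale cA: cyc scA \<sigma>1 \<omega> m by (simp add: cyc_def cyc_axioms_def vsA s1lin s1ord mpos mnz wm prim)
sublocale cS: cyc scS \<sigma>2 \<omega> m by (simp add: cyc_def cyc_axioms_def vsS s2lin s2ord mpos mnz wm prim)
sublocale cT: cyc scT \<sigma>T \<omega> m by (simp add: cyc_def cyc_axioms_def vsT sTlin sTord mpos mnz wm prim)

lemma lin_sum:
  assumes "Vector_Spaces.linear scT scT f" shows "f (\<Sum>i\<in>I. g i) = (\<Sum>i\<in>I. f (g i))"
proof -
  interpret l: Vector_Spaces.linear scT scT f by (rule assms)
  show ?thesis by (rule l.sum)
qed

lemma lin_add: "Vector_Spaces.linear scT scT f \<Longrightarrow> f (x + y) = f x + f y"
  by (simp add: Vector_Spaces.linear_iff)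
lemma lin_scale: "Vector_Spaces.linear scT scT f \<Longrightarrow> f (scT c x) = scT c (f x)"
  by (simp add: Vector_Spaces.linear_iff)
lemma lin_zero: "Vector_Spaces.linear scT scT f \<Longrightarrow> f 0 = 0"
  using lin_add[of f 0 0] by simp

lemma E_sub: "vT.subspace (E j)"
  using sTlin lin_zero[OF sTlin] unfolding vT.subspace_def E_def Vector_Spaces.linear_iff
  by (auto simp: vT.scale_right_distrib mult.commute)

lemma E_mod: "E j = E (j mod m)" unfolding E_def using cT.w_mod[of j] by simp

lemma TC_sub: "vT.subspace (TC j)" unfolding tensor_comp_def by simp

lemma tens_eig: "a \<in> eigcomp scA \<sigma>1 \<omega> p \<Longrightarrow> s \<in> eigcomp scS \<sigma>2 \<omega> q \<Longrightarrow> tens a s \<in> E (p + q)"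
  unfolding eigcomp_def E_def by (simp add: sTt t.B2 t.B4 power_add mult.commute)

lemma TC_sub_E: "TC j \<subseteq> E j"
  unfolding tensor_comp_def
proof (rule vT.span_minimal[OF _ E_sub], safe)
  fix a s j' assume j': "j' < m" and a: "a \<in> eigcomp scA \<sigma>1 \<omega> ((j + m - j') mod m)"
    and s: "s \<in> eigcomp scS \<sigma>2 \<omega> j'"
  have "tens a s \<in> E ((j + m - j') mod m + j')" by (rule tens_eig[OF a s])
  moreover have "((j + m - j') mod m + j') mod m = j mod m"
  proof -
    have "((j + m - j') mod m + j') mod m = ((j + m - j') + j') mod m" by (simp add: mod_add_left_eq)
    also have "(j + m - j') + j' = j + m" using j' by simp
    finally show ?thesis by simp
  qed
  ultimately show "tens a s \<in> E j" using E_mod[of "(j + m - j') mod m + j'"] E_mod[of j] by simp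
qed

lemma mod_arith: "p < m \<Longrightarrow> q < m \<Longrightarrow> ((p + q) mod m + m - q) mod m = p"
proof (cases "p + q < m")
  case True
  assume "p < m" "q < m"
  then have "(p + q) mod m = p + q" using True by simp
  then show ?thesis using True \<open>p < m\<close> by simp
next
  case False
  assume pq: "p < m" "q < m"
  then have "(p + q) mod m = p + q - m" using False by (simp add: mod_if)
  then show ?thesis using False pq by simp
qed

lemma gen_in_TC:
  assumes "p < m" "q < m" "a \<in> eigcomp scA \<sigma>1 \<omega> p" "s \<in> eigcomp scS \<sigma>2 \<omega> q"
  shows "tens a s \<in> TC ((p + q) mod m)"
proof -
  have a2: "a \<in> eigcomp scA \<sigma>1 \<omega> (((p + q) mod m + m - q) mod m)" using mod_arith assms by simp
  show ?thesis unfolding tensor_comp_def by (rule vT.span_base) (use a2 assms in blast)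
qed

lemma prj_gen: assumes n: "n < m" shows "cT.prj n (tens a s) \<in> TC n"
proof -
  have "tens a s = tens (\<Sum>p<m. cA.prj p a) (\<Sum>q<m. cS.prj q s)" by (simp only: cA.sum_prj cS.sum_prj)
  also have "\<dots> = (\<Sum>p<m. \<Sum>q<m. tens (cA.prj p a) (cS.prj q s))" by (subst t.Bsum_l) (simp only: t.Bsum_r)
  finally have "tens a s = (\<Sum>p<m. \<Sum>q<m. tens (cA.prj p a) (cS.prj q s))" .
  then have "cT.prj n (tens a s) = (\<Sum>p<m. \<Sum>q<m. cT.prj n (tens (cA.prj p a) (cS.prj q s)))"
    using cT.linear_prj by (simp add: lin_sum)
  also have "\<dots> \<in> TC n"
  proof (intro vT.subspace_sum[OF TC_sub])
    fix p q assume p: "p \<in> {..<m}" and q: "q \<in> {..<m}"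
    have a: "cA.prj p a \<in> eigcomp scA \<sigma>1 \<omega> p" unfolding eigcomp_def by (simp add: cA.prj_eigvec)
    have s: "cS.prj q s \<in> eigcomp scS \<sigma>2 \<omega> q" unfolding eigcomp_def by (simp add: cS.prj_eigvec)
    have "tens (cA.prj p a) (cS.prj q s) \<in> E (p + q)" by (rule tens_eig[OF a s])
    then have "cT.prj n (tens (cA.prj p a) (cS.prj q s)) = (if (p + q) mod m = n then tens (cA.prj p a) (cS.prj q s) else 0)"
      unfolding E_def using cT.prj_eig n by simp
    then show "cT.prj n (tens (cA.prj p a) (cS.prj q s)) \<in> TC n"
      using gen_in_TC[OF _ _ a s] p q vT.subspace_0[OF TC_sub] by auto
  qed
  finally show ?thesis .
qed

lemma prj_TC: assumes n: "n < m" shows "cT.prj n x \<in> TC n"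
  using in_span_gen[of x]
proof (induction rule: vT.span_induct_alt)
  case base then show ?case using cT.linear_prj lin_zero vT.subspace_0[OF TC_sub] by metis
next
  case (step c x y)
  then obtain a s where "x = tens a s" by auto
  then have "cT.prj n x \<in> TC n" using prj_gen[OF n] by simp
  then show ?case using step cT.linear_prj[of n] TC_sub[of n]
    by (simp add: lin_add lin_scale vT.subspace_add vT.subspace_scale)
qed

lemma E_TC: assumes n: "n < m" shows "E n = TC n"
proof
  show "TC n \<subseteq> E n" by (rule TC_sub_E)
  show "E n \<subseteq> TC n"
  proof
    fix x assume "x \<in> E n"
    then have "cT.prj n x = x" using cT.prj_eig[of x n n] n unfolding E_def by simp
    then show "x \<in> TC n" using prj_TC[OF n, of x] by simp
  qed
qed

lemma lin_mulL: "Vector_Spaces.linear scT scT (\<lambda>x. mulT x y)"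
  unfolding Vector_Spaces.linear_iff using vsT by (simp add: mB1 mB3)
lemma lin_mulR: "Vector_Spaces.linear scT scT (\<lambda>y. mulT x y)"
  unfolding Vector_Spaces.linear_iff using vsT by (simp add: mB2 mB4)
lemma lin_comp: "Vector_Spaces.linear scT scT f \<Longrightarrow> Vector_Spaces.linear scT scT g \<Longrightarrow> Vector_Spaces.linear scT scT (\<lambda>x. g (f x))"
  using Vector_Spaces.linear_compose[of scT scT f scT g] by (simp add: o_def)

lemma sT_mul: "\<sigma>T (mulT x y) = mulT (\<sigma>T x) (\<sigma>T y)"
proof -
  have gen: "\<sigma>T (mulT x (tens b t)) = mulT (\<sigma>T x) (\<sigma>T (tens b t))" for x b t
    by (rule lin_eq[OF lin_comp[OF lin_mulL sTlin] lin_comp[OF sTlin lin_mulL]])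
       (simp add: prodT sTt s1mul s2mul)
  show ?thesis
    by (rule lin_eq[OF lin_comp[OF lin_mulR sTlin] lin_comp[OF sTlin lin_mulR]]) (rule gen)
qed

lemma sT_L: "\<sigma>T (L s x) = L (\<sigma>2 s) (\<sigma>T x)"
  by (rule lin_eq[OF lin_comp[OF Llin sTlin] lin_comp[OF sTlin Llin]]) (simp add: Lt sTt s2mul)

lemma L_mult: "L (s * t) x = L s (L t x)"
  by (rule lin_eq[OF Llin lin_comp[OF Llin Llin]]) (simp add: Lt mult.assoc)

lemma L_one: "L 1 x = x"
proof -
  have "L 1 x = id x" by (rule lin_eq[OF Llin vT.linear_id]) (simp add: Lt)
  then show ?thesis by simp
qed

lemma lin_sc: "Vector_Spaces.linear scT scT f \<Longrightarrow> Vector_Spaces.linear scT scT (\<lambda>x. scT c (f x))"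
  unfolding Vector_Spaces.linear_iff by (auto simp: vT.scale_right_distrib mult.commute)

lemma L_scale: "L (scS c s) x = scT c (L s x)"
  by (rule lin_eq[OF Llin lin_sc[OF Llin]]) (simp add: Lt t.B4 flip: Sal)

lemma L_mul_mul: "mulT (L s x) (L t y) = L (s * t) (mulT x y)"
  by (simp only: Lc1[symmetric] Lc2[symmetric] L_mult[symmetric] mult.commute)

definition e where "e c = scS c 1"
lemma scS_e: "scS c p = e c * p" unfolding e_def using Sal[of c 1 p] by simp
lemma e_mult: "e (a * b) = e a * e b"
  unfolding e_def by (metis scS_e e_def vS.scale_scale)
lemma e_one: "e 1 = 1" unfolding e_def by simp
lemma e_pow: "e (a ^ j) = e a ^ j" by (induction j) (auto simp: e_one e_mult)

lemma s2_pow: "\<sigma>2 (p ^ j) = \<sigma>2 p ^ j" by (induction j) (auto simp: s2one s2mul)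

lemma s2_u: "\<sigma>2 (u ^ j) = scS (\<omega> ^ j) (u ^ j)"
  by (simp add: s2_pow uw scS_e e_pow power_mult_distrib)

lemma s2_v: "\<sigma>2 v = scS (inverse \<omega>) v"
proof -
  have "\<sigma>2 u * \<sigma>2 v = 1" using uv s2mul[of u v] s2one by simp
  then have h: "e \<omega> * u * \<sigma>2 v = 1" by (simp add: uw scS_e)
  have ie: "e (inverse \<omega>) * e \<omega> = 1" using cT.w_nz by (simp flip: e_mult add: e_one)
  have "\<sigma>2 v = (e (inverse \<omega>) * e \<omega>) * \<sigma>2 v * (u * v)" using ie uv by simp
  also have "\<dots> = e (inverse \<omega>) * v * (e \<omega> * u * \<sigma>2 v)" by (simp add: ac_simps)
  finally show ?thesis using h by (simp add: scS_e)
qed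

lemma s2_vp: "\<sigma>2 (v ^ j) = scS (inverse \<omega> ^ j) (v ^ j)"
  by (simp add: s2_pow s2_v scS_e e_pow power_mult_distrib)

lemma uv_pow: "u ^ j * v ^ j = 1" by (metis power_mult_distrib uv power_one)

lemma UV: "L (u ^ j) (L (v ^ j) x) = x" by (simp flip: L_mult add: uv_pow L_one)
lemma VU: "L (v ^ j) (L (u ^ j) x) = x" by (simp flip: L_mult add: uv_pow L_one mult.commute)

lemma U_E: "x \<in> E i \<Longrightarrow> L (u ^ j) x \<in> E (i + j)"
  unfolding E_def by (simp add: sT_L s2_u L_scale lin_scale[OF Llin] power_add mult.commute)

lemma V_E: "x \<in> E (i + j) \<Longrightarrow> L (v ^ j) x \<in> E i"
proof -
  assume x: "x \<in> E (i + j)"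
  have "\<omega> ^ (i + j) * inverse \<omega> ^ j = \<omega> ^ i" using cT.w_nz by (simp add: power_add power_inverse field_simps)
  with x show ?thesis unfolding E_def by (simp add: sT_L s2_vp L_scale lin_scale[OF Llin])
qed

lemma E_mul: "x \<in> E i \<Longrightarrow> y \<in> E j \<Longrightarrow> mulT x y \<in> E (i + j)"
  unfolding E_def by (simp add: sT_mul mB3 mB4 power_add mult.commute)

lemma E_m: "E (i + m) = E i" using E_mod[of "i + m"] E_mod[of i] by simp

lemma E0_TC: "E 0 = TC 0" using E_TC[of 0] mpos by simp

lemma d_in: "x \<in> E 0 \<Longrightarrow> d x \<in> E 0"
  using dder unfolding derivations_on_def E0_TC by blast
lemma d_add: "x \<in> E 0 \<Longrightarrow> y \<in> E 0 \<Longrightarrow> d (x + y) = d x + d y"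
  using dder unfolding derivations_on_def E0_TC by blast
lemma d_sc: "x \<in> E 0 \<Longrightarrow> d (scT c x) = scT c (d x)"
  using dder unfolding derivations_on_def E0_TC by blast
lemma d_leib: "x \<in> E 0 \<Longrightarrow> y \<in> E 0 \<Longrightarrow> d (mulT x y) = mulT (d x) y + mulT x (d y)"
  using dder unfolding derivations_on_def E0_TC by blast
lemma E_0: "0 \<in> E j" using vT.subspace_0[OF E_sub] .
lemma E_add: "x \<in> E j \<Longrightarrow> y \<in> E j \<Longrightarrow> x + y \<in> E j" using vT.subspace_add[OF E_sub] .
lemma E_diff: "x \<in> E j \<Longrightarrow> y \<in> E j \<Longrightarrow> x - y \<in> E j" using vT.subspace_diff[OF E_sub] .
lemma E_sc: "x \<in> E j \<Longrightarrow> scT c x \<in> E j" using vT.subspace_scale[OF E_sub] .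
lemma d_zero: "d 0 = 0" using d_add[OF E_0 E_0] by simp

lemma mdiff_l: "mulT (a - b) y = mulT a y - mulT b y"
  using mB1[of a "- b" y] mt.Bneg[of b y] by simp
lemma mdiff_r: "mulT x (a - b) = mulT x a - mulT x b"
  using mB2[of x a "- b"] mt.Bneg[of b] lin_scale[OF lin_mulR, of x "-1" b] by (simp add: vT.scale_minus_left)
lemma L_diff: "L s (a - b) = L s a - L s b"
proof -
  interpret l: Vector_Spaces.linear scT scT "L s" by (rule Llin)
  show ?thesis by (rule l.diff)
qed
lemma L_add: "L s (a + b) = L s a + L s b" by (rule lin_add[OF Llin])
lemma L_sc: "L s (scT c a) = scT c (L s a)" by (rule lin_scale[OF Llin])
lemma L_zero: "L s 0 = 0" by (rule lin_zero[OF Llin])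

abbreviation U where "U j \<equiv> L (u ^ j)"
abbreviation V where "V j \<equiv> L (v ^ j)"

lemma Um0: "x \<in> E 0 \<Longrightarrow> U m x \<in> E 0" using U_E[of x 0 m] E_m[of 0] by simp
lemma Vm0: "x \<in> E 0 \<Longrightarrow> V m x \<in> E 0" using V_E[of x 0 m] E_m[of 0] by simp
lemma Uj: "x \<in> E 0 \<Longrightarrow> U j x \<in> E j" using U_E[of x 0 j] by simp
lemma Vj: "x \<in> E j \<Longrightarrow> V j x \<in> E 0" using V_E[of x 0 j] by simp

definition \<delta> where "\<delta> z = V m (d (U m z)) - d z"

lemma \<delta>_in: "z \<in> E 0 \<Longrightarrow> \<delta> z \<in> E 0"
  unfolding \<delta>_def by (intro E_diff Vm0 d_in Um0)

lemma \<delta>_add: "x \<in> E 0 \<Longrightarrow> y \<in> E 0 \<Longrightarrow> \<delta> (x + y) = \<delta> x + \<delta> y"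
  unfolding \<delta>_def by (simp add: L_add d_add Um0 algebra_simps)

lemma \<delta>_sc: "x \<in> E 0 \<Longrightarrow> \<delta> (scT c x) = scT c (\<delta> x)"
  unfolding \<delta>_def by (simp add: L_sc d_sc Um0 vT.scale_right_diff_distrib)

lemma \<delta>_l: assumes "x \<in> E 0" "y \<in> E 0" shows "\<delta> (mulT x y) = mulT (\<delta> x) y"
proof -
  have "U m (mulT x y) = mulT (U m x) y" by (rule Lc1)
  then have "d (U m (mulT x y)) = mulT (d (U m x)) y + mulT (U m x) (d y)"
    using d_leib[OF Um0[OF assms(1)] assms(2)] by simp
  then have "V m (d (U m (mulT x y))) = mulT (V m (d (U m x))) y + mulT x (d y)"
    by (simp add: L_add Lc1[of "v ^ m"] VU)
  then show ?thesis unfolding \<delta>_def using d_leib[OF assms] by (simp add: mdiff_l)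
qed

lemma \<delta>_r: assumes "x \<in> E 0" "y \<in> E 0" shows "\<delta> (mulT x y) = mulT x (\<delta> y)"
proof -
  have "U m (mulT x y) = mulT x (U m y)" by (rule Lc2)
  then have "d (U m (mulT x y)) = mulT (d x) (U m y) + mulT x (d (U m y))"
    using d_leib[OF assms(1) Um0[OF assms(2)]] by simp
  then have "V m (d (U m (mulT x y))) = mulT (d x) y + mulT x (V m (d (U m y)))"
    by (simp add: L_add Lc2[of "v ^ m"] VU)
  then show ?thesis unfolding \<delta>_def using d_leib[OF assms] by (simp add: mdiff_r)
qed

lemma \<delta>_U: assumes "x \<in> E 0" "y \<in> E 0" shows "\<delta> (U m (mulT x y)) = U m (\<delta> (mulT x y))"
proof -
  have "\<delta> (U m (mulT x y)) = \<delta> (mulT (U m x) y)" by (simp add: Lc1)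
  also have "\<dots> = mulT (U m x) (\<delta> y)" by (rule \<delta>_r[OF Um0[OF assms(1)] assms(2)])
  also have "\<dots> = U m (mulT x (\<delta> y))" by (simp add: Lc1)
  also have "\<dots> = U m (\<delta> (mulT x y))" by (simp add: \<delta>_r[OF assms])
  finally show ?thesis .
qed

lemma d_U: "z \<in> E 0 \<Longrightarrow> d (U m z) = U m (d z + \<delta> z)"
  unfolding \<delta>_def by (simp add: L_add L_diff UV)

definition Dn where "Dn n y = U n (d (V n y) + scT (of_nat n / of_nat m) (\<delta> (V n y)))"

lemma Dn_in: "y \<in> E n \<Longrightarrow> Dn n y \<in> E n"
  unfolding Dn_def by (intro Uj E_add d_in Vj E_sc \<delta>_in)

lemma Dn_add: "y \<in> E n \<Longrightarrow> z \<in> E n \<Longrightarrow> Dn n (y + z) = Dn n y + Dn n z"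
  unfolding Dn_def by (simp add: L_add d_add \<delta>_add Vj vT.scale_right_distrib algebra_simps)

lemma Dn_sc: "y \<in> E n \<Longrightarrow> Dn n (scT c y) = scT c (Dn n y)"
  unfolding Dn_def by (simp add: L_sc L_add d_sc \<delta>_sc Vj vT.scale_right_distrib mult.commute)

lemma Dn_zero: "Dn n 0 = 0" using Dn_add[OF E_0 E_0, of n] by simp

definition D where "D x = (\<Sum>n<m. Dn n (cT.prj n x))"

lemma prjE: "n < m \<Longrightarrow> cT.prj n x \<in> E n" using prj_TC E_TC by simp

lemma D_hom: assumes "i < m" "x \<in> E i" shows "D x = Dn i x"
proof -
  have "D x = (\<Sum>n<m. if n = i then Dn n x else 0)"
    unfolding D_def
  proof (rule sum.cong[OF refl])
    fix n assume "n \<in> {..<m}"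
    then have "cT.prj n x = (if i = n then x else 0)" using cT.prj_eig[of x i n] assms unfolding E_def by simp
    then show "Dn n (cT.prj n x) = (if n = i then Dn n x else 0)" by (auto simp: Dn_zero)
  qed
  also have "\<dots> = Dn i x" using assms by (simp add: sum.delta)
  finally show ?thesis .
qed

lemma D_lin: "Vector_Spaces.linear scT scT D"
  unfolding Vector_Spaces.linear_iff
proof (intro conjI allI)
  show "vector_space scT" "vector_space scT" by (rule vsT)+
  fix x y
  show "D (x + y) = D x + D y" unfolding D_def
    by (simp add: lin_add[OF cT.linear_prj] Dn_add prjE sum.distrib)
next
  fix c x
  show "D (scT c x) = scT c (D x)" unfolding D_def
    by (simp add: lin_scale[OF cT.linear_prj] Dn_sc prjE vT.scale_sum_right)
qed

lemma key:
  assumes "w \<in> E 0" "w = mulT x' y'" "x' \<in> E 0" "y' \<in> E 0" and ijm: "i < m" "j < m"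
  shows "Dn ((i + j) mod m) (U (i + j) w) = U (i + j) (d w + scT (of_nat (i + j) / of_nat m) (\<delta> w))"
proof (cases "i + j < m")
  case True
  then show ?thesis unfolding Dn_def by (simp add: VU)
next
  case False
  define r where "r = i + j - m"
  have ij: "i + j = r + m" using False unfolding r_def by simp
  have rlt: "r < m" using ijm unfolding r_def by simp
  have rmod: "(i + j) mod m = r" using rlt unfolding ij by simp
  have Uij: "U (i + j) z = U r (U m z)" for z by (simp add: ij power_add L_mult)
  have VUr: "V r (U (i + j) w) = U m w" by (simp add: Uij VU)
  have dU: "d (U m w) = U m (d w + \<delta> w)" by (rule d_U[OF assms(1)])
  have \<delta>U: "\<delta> (U m w) = U m (\<delta> w)" using \<delta>_U[OF assms(3,4)] assms(2) by simp
  have sc: "\<delta> w + scT (of_nat r / of_nat m) (\<delta> w) = scT (of_nat (i + j) / of_nat m) (\<delta> w)"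
  proof -
    have "1 + of_nat r / of_nat m = (of_nat (i + j) / of_nat m :: 'k)" using mnz by (simp add: ij field_simps)
    then show ?thesis using vT.scale_left_distrib[of 1 "of_nat r / of_nat m" "\<delta> w"] by simp
  qed
  have "Dn ((i + j) mod m) (U (i + j) w) = U r (d (U m w) + scT (of_nat r / of_nat m) (\<delta> (U m w)))"
    unfolding Dn_def rmod VUr ..
  also have "\<dots> = U r (U m (d w + \<delta> w + scT (of_nat r / of_nat m) (\<delta> w)))"
    by (simp add: dU \<delta>U L_add L_sc)
  also have "\<dots> = U (i + j) (d w + scT (of_nat (i + j) / of_nat m) (\<delta> w))"
    by (simp add: Uij add.assoc sc)
  finally show ?thesis .
qed

lemma leib_hom:
  assumes i: "i < m" and j: "j < m" and x: "x \<in> E i" and y: "y \<in> E j"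
  shows "D (mulT x y) = mulT (D x) y + mulT x (D y)"
proof -
  define x' where "x' = V i x"
  define y' where "y' = V j y"
  have x': "x' \<in> E 0" unfolding x'_def by (rule Vj[OF x])
  have y': "y' \<in> E 0" unfolding y'_def by (rule Vj[OF y])
  define w where "w = mulT x' y'"
  have w: "w \<in> E 0" using E_mul[OF x' y'] unfolding w_def by simp
  have xx: "x = U i x'" unfolding x'_def by (simp add: UV)
  have yy: "y = U j y'" unfolding y'_def by (simp add: UV)
  have xy: "mulT x y = U (i + j) w" unfolding w_def xx yy by (simp add: L_mul_mul power_add)
  have xyE: "mulT x y \<in> E ((i + j) mod m)" using E_mul[OF x y] E_mod by simp
  have "D (mulT x y) = Dn ((i + j) mod m) (mulT x y)" using D_hom[OF _ xyE] mpos by simp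
  also have "\<dots> = U (i + j) (d w + scT (of_nat (i + j) / of_nat m) (\<delta> w))"
    unfolding xy by (rule key[OF w w_def x' y' i j])
  finally have lhs: "D (mulT x y) = U (i + j) (d w + scT (of_nat (i + j) / of_nat m) (\<delta> w))" .
  have Dx: "D x = U i (d x' + scT (of_nat i / of_nat m) (\<delta> x'))"
    using D_hom[OF i x] unfolding Dn_def x'_def .
  have Dy: "D y = U j (d y' + scT (of_nat j / of_nat m) (\<delta> y'))"
    using D_hom[OF j y] unfolding Dn_def y'_def .
  have e1: "mulT (D x) y = U (i + j) (mulT (d x') y' + scT (of_nat i / of_nat m) (\<delta> w))"
    unfolding Dx yy by (simp add: L_mul_mul power_add mB1 mB3 w_def \<delta>_l[OF x' y'])
  have e2: "mulT x (D y) = U (i + j) (mulT x' (d y') + scT (of_nat j / of_nat m) (\<delta> w))"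
    unfolding Dy xx by (simp add: L_mul_mul power_add mB2 mB4 w_def \<delta>_r[OF x' y'])
  have dw: "d w = mulT (d x') y' + mulT x' (d y')" unfolding w_def by (rule d_leib[OF x' y'])
  have sc: "scT (of_nat (i + j) / of_nat m) (\<delta> w) = scT (of_nat i / of_nat m) (\<delta> w) + scT (of_nat j / of_nat m) (\<delta> w)"
    by (simp add: add_divide_distrib vT.scale_left_distrib)
  have "mulT (D x) y + mulT x (D y) = U (i + j) ((mulT (d x') y' + scT (of_nat i / of_nat m) (\<delta> w)) + (mulT x' (d y') + scT (of_nat j / of_nat m) (\<delta> w)))"
    unfolding e1 e2 by (simp only: L_add)
  also have "(mulT (d x') y' + scT (of_nat i / of_nat m) (\<delta> w)) + (mulT x' (d y') + scT (of_nat j / of_nat m) (\<delta> w))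
      = d w + scT (of_nat (i + j) / of_nat m) (\<delta> w)"
    unfolding dw sc by (simp only: add_ac)
  finally show ?thesis using lhs by simp
qed

lemma D_add: "D (x + y) = D x + D y" by (rule lin_add[OF D_lin])

lemma mul_sums: "mulT (\<Sum>i\<in>I. f i) (\<Sum>j\<in>J. g j) = (\<Sum>i\<in>I. \<Sum>j\<in>J. mulT (f i) (g j))"
  by (subst mt.Bsum_l) (simp only: mt.Bsum_r)

lemma leib: "D (mulT x y) = mulT (D x) y + mulT x (D y)"
proof -
  have xs: "x = (\<Sum>i<m. cT.prj i x)" by (simp add: cT.sum_prj)
  have ys: "y = (\<Sum>j<m. cT.prj j y)" by (simp add: cT.sum_prj)
  have "mulT x y = (\<Sum>i<m. \<Sum>j<m. mulT (cT.prj i x) (cT.prj j y))"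
    by (subst xs, subst ys) (rule mul_sums)
  then have "D (mulT x y) = (\<Sum>i<m. \<Sum>j<m. D (mulT (cT.prj i x) (cT.prj j y)))"
    by (simp add: lin_sum[OF D_lin])
  also have "\<dots> = (\<Sum>i<m. \<Sum>j<m. mulT (D (cT.prj i x)) (cT.prj j y) + mulT (cT.prj i x) (D (cT.prj j y)))"
  proof (intro sum.cong refl)
    fix i j assume "i \<in> {..<m}" "j \<in> {..<m}"
    then show "D (mulT (cT.prj i x) (cT.prj j y)) = mulT (D (cT.prj i x)) (cT.prj j y) + mulT (cT.prj i x) (D (cT.prj j y))"
      using leib_hom[OF _ _ prjE prjE] by simp
  qed
  also have "\<dots> = mulT (\<Sum>i<m. D (cT.prj i x)) (\<Sum>j<m. cT.prj j y) + mulT (\<Sum>i<m. cT.prj i x) (\<Sum>j<m. D (cT.prj j y))"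
    by (simp only: sum.distrib mul_sums)
  also have "\<dots> = mulT (D x) y + mulT x (D y)"
    by (simp only: lin_sum[OF D_lin, symmetric] cT.sum_prj)
  finally show ?thesis .
qed

lemma result:
  "\<exists>D \<in> derivations scT mulT. (\<forall>j<m. D ` TC j \<subseteq> TC j) \<and> (\<forall>x \<in> TC 0. D x = d x)"
proof (intro bexI conjI allI impI ballI)
  show "D \<in> derivations scT mulT" unfolding derivations_def using D_lin leib by blast
next
  fix j assume j: "j < m"
  show "D ` TC j \<subseteq> TC j"
  proof
    fix y assume "y \<in> D ` TC j"
    then obtain x where x: "x \<in> TC j" "y = D x" by auto
    then have xE: "x \<in> E j" using E_TC[OF j] by simp
    have "y = Dn j x" using D_hom[OF j xE] x by simp
    then show "y \<in> TC j" using Dn_in[OF xE] E_TC[OF j] by simp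
  qed
next
  fix x assume "x \<in> TC 0"
  then have xE: "x \<in> E 0" using E0_TC by simp
  show "D x = d x" using D_hom[OF mpos xE] unfolding Dn_def by (simp add: L_one)
qed

end

theorem lemma4p8:
  fixes scA :: "'k::field \<Rightarrow> 'a::ab_group_add \<Rightarrow> 'a"
    and mulA :: "'a \<Rightarrow> 'a \<Rightarrow> 'a"
    and scS :: "'k \<Rightarrow> 's::comm_ring_1 \<Rightarrow> 's"
    and scT :: "'k \<Rightarrow> 't::ab_group_add \<Rightarrow> 't"
    and mulT :: "'t \<Rightarrow> 't \<Rightarrow> 't"
    and tens :: "'a \<Rightarrow> 's \<Rightarrow> 't"
    and scC :: "'k \<Rightarrow> 'c::ab_group_add \<Rightarrow> 'c"
    and tensC :: "('a \<Rightarrow> 'a) \<Rightarrow> 's \<Rightarrow> 'c"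
    and \<sigma>1 :: "'a \<Rightarrow> 'a" and \<sigma>2 :: "'s \<Rightarrow> 's"
    and \<omega> :: 'k and m :: nat and u :: 's
  assumes m_pos: "m > 0"
    and all_roots: "card {x::'k. x ^ m = 1} = m"
    and char_ndvd: "of_nat m \<noteq> (0::'k)"
    and omega_prim: "\<omega> ^ m = 1" "\<forall>j. 0 < j \<and> j < m \<longrightarrow> \<omega> ^ j \<noteq> 1"
    and A_alg: "k_algebra scA mulA"
    and A_perfect: "perfect scA mulA"
    and S_alg: "comm_unital_k_algebra scS"
    and T_tensor: "is_tensor_algebra scA mulA scS scT mulT tens"
    and \<sigma>1_aut: "alg_aut scA mulA \<sigma>1" and \<sigma>1_order: "\<sigma>1 ^^ m = id"
    and \<sigma>2_aut: "alg_aut scS (*) \<sigma>2" and \<sigma>2_order: "\<sigma>2 ^^ m = id"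
    and u_deg1: "u \<in> eigcomp scS \<sigma>2 \<omega> 1" and u_unit: "\<exists>v. u * v = 1"
    and C_tensor: "is_tensor (\<lambda>c g x. scA c (g x)) (centroid scA mulA) scS scC tensC"
    and psi_iso: "\<exists>\<psi>. Vector_Spaces.linear scC (\<lambda>c F y. scT c (F y)) \<psi> \<and> inj \<psi> \<and>
                     \<psi> ` UNIV = centroid scT mulT \<and>
                     (\<forall>\<gamma>\<in>centroid scA mulA. \<forall>s a t.
                         \<psi> (tensC \<gamma> s) (tens a t) = tens (\<gamma> a) (s * t))"
  shows "\<forall>d \<in> derivations_on scT mulT (tensor_comp scA \<sigma>1 scS \<sigma>2 scT tens \<omega> m 0).
           \<exists>D \<in> derivations scT mulT.
             (\<forall>j<m. D ` tensor_comp scA \<sigma>1 scS \<sigma>2 scT tens \<omega> m j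
                      \<subseteq> tensor_comp scA \<sigma>1 scS \<sigma>2 scT tens \<omega> m j) \<and>
             (\<forall>x \<in> tensor_comp scA \<sigma>1 scS \<sigma>2 scT tens \<omega> m 0. D x = d x)"
proof -
  have vsA: "vector_space scA" using A_alg unfolding k_algebra_def by blast
  have vsS: "vector_space scS" and Sal0: "\<forall>c x y. scS c (x * y) = scS c x * y"
    using S_alg unfolding comm_unital_k_algebra_def by blast+
  have tensT: "is_tensor scA UNIV scS scT tens" and kT: "k_algebra scT mulT"
    and prodT0: "\<forall>a s b t. mulT (tens a s) (tens b t) = tens (mulA a b) (s * t)"
    using T_tensor unfolding is_tensor_algebra_def by blast+
  have vsT: "vector_space scT" using kT unfolding k_algebra_def by blast
  have mB1: "mulT (x + y) z = mulT x z + mulT y z" for x y z using kT unfolding k_algebra_def by blast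
  have mB2: "mulT x (y + z) = mulT x y + mulT x z" for x y z using kT unfolding k_algebra_def by blast
  have mB3: "mulT (scT c x) y = scT c (mulT x y)" for c x y using kT unfolding k_algebra_def by blast
  have mB4: "mulT x (scT c y) = scT c (mulT x y)" for c x y using kT unfolding k_algebra_def by blast
  have prodT: "mulT (tens a s) (tens b t) = tens (mulA a b) (s * t)" for a s b t using prodT0 by blast
  have Sal: "scS c (p * q) = scS c p * q" for c p q using Sal0 by blast
  have s1lin: "Vector_Spaces.linear scA scA \<sigma>1" and s1mul: "\<And>a b. \<sigma>1 (mulA a b) = mulA (\<sigma>1 a) (\<sigma>1 b)"
    using \<sigma>1_aut unfolding alg_aut_def by blast+
  have s2lin: "Vector_Spaces.linear scS scS \<sigma>2" and s2mul: "\<And>p q. \<sigma>2 (p * q) = \<sigma>2 p * \<sigma>2 q"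
    and s2bij: "bij \<sigma>2"
    using \<sigma>2_aut unfolding alg_aut_def by blast+
  have s2one: "\<sigma>2 1 = 1"
  proof -
    obtain y where y: "\<sigma>2 y = 1" using s2bij by (metis bij_pointE)
    have "\<sigma>2 1 = \<sigma>2 1 * \<sigma>2 y" using y by simp
    also have "\<dots> = \<sigma>2 y" by (simp flip: s2mul)
    finally show ?thesis using y by simp
  qed
  interpret t: bil scA scS scT tens by (rule tensor_bil[OF tensT vsA vsS])
  have bB: "bil scA scS scT (\<lambda>a s. tens (\<sigma>1 a) (\<sigma>2 s))"
    unfolding bil_def using vsA vsS vsT s1lin s2lin
    by (simp add: Vector_Spaces.linear_iff t.B1 t.B2 t.B3 t.B4)
  obtain \<sigma>T where sTlin: "Vector_Spaces.linear scT scT \<sigma>T" and sTt0: "\<forall>a s. \<sigma>T (tens a s) = tens (\<sigma>1 a) (\<sigma>2 s)"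
    using tensor_lift[OF tensT vsA vsS bB] by blast
  have sTt: "\<sigma>T (tens a s) = tens (\<sigma>1 a) (\<sigma>2 s)" for a s using sTt0 by blast
  obtain \<psi> where psi: "\<psi> ` UNIV = centroid scT mulT"
      "\<forall>\<gamma>\<in>centroid scA mulA. \<forall>s a t. \<psi> (tensC \<gamma> s) (tens a t) = tens (\<gamma> a) (s * t)"
    using psi_iso by blast
  define L where "L s = \<psi> (tensC id s)" for s
  have idC: "id \<in> centroid scA mulA"
  proof -
    interpret vA: vector_space scA by (rule vsA)
    show ?thesis unfolding centroid_def using vA.linear_id by simp
  qed
  have LC: "L s \<in> centroid scT mulT" for s unfolding L_def using psi(1) by blast
  have Llin: "Vector_Spaces.linear scT scT (L s)" for s using LC[of s] unfolding centroid_def by blast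
  have Lc1: "L s (mulT x y) = mulT (L s x) y" for s x y using LC[of s] unfolding centroid_def by blast
  have Lc2: "L s (mulT x y) = mulT x (L s y)" for s x y using LC[of s] unfolding centroid_def by blast
  have Lt: "L s (tens a t) = tens a (s * t)" for s a t unfolding L_def using psi(2) idC by simp
  obtain v where uv: "u * v = 1" using u_unit by blast
  have uw: "\<sigma>2 u = scS \<omega> u" using u_deg1 unfolding eigcomp_def by simp
  show ?thesis
  proof
    fix d assume dd: "d \<in> derivations_on scT mulT (tensor_comp scA \<sigma>1 scS \<sigma>2 scT tens \<omega> m 0)"
    interpret M: main scA mulA scS scT mulT tens \<sigma>1 \<sigma>2 \<omega> m u v \<sigma>T L d
      by (rule main.intro[OF vsA vsS tensT mB1 mB2 mB3 mB4 prodT Sal s1lin s1mul \<sigma>1_order s2lin s2mul s2one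
            \<sigma>2_order sTlin sTt Llin Lt Lc1 Lc2 m_pos char_ndvd omega_prim(1) omega_prim(2) uw uv dd])
    show "\<exists>D\<in>derivations scT mulT. (\<forall>j<m. D ` tensor_comp scA \<sigma>1 scS \<sigma>2 scT tens \<omega> m j \<subseteq> tensor_comp scA \<sigma>1 scS \<sigma>2 scT tens \<omega> m j) \<and>
             (\<forall>x\<in>tensor_comp scA \<sigma>1 scS \<sigma>2 scT tens \<omega> m 0. D x = d x)"
      by (rule M.result)
  qed
qed

end
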